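(* Let $A,C>0$ be given constants and let $r>0$ be a fixed constant. For $N$ sufficiently large the following holds: for any $x\in I_W$ there does not exist a real number $D$ with $r\le D\le N^{A}$ such that \[\sum_{i=1}^n\|D\,b_i(x)\|_{\mathbb R/\mathbb Z}^2\le C\log N.\]
   Context: Let $0<c_1<c_2$ be constants, $n$ a large integer and $M$ a large parameter (possibly growing with $n$) with $I_W:=[c_1M,c_2M]\subset[0,\sqrt n-M]$; set $N:=M$. For $x>0$ and $1\le i\le n$ let $b_i(x)=\sqrt N\,e^{-x^2/2}\,x^i/\sqrt{i!}$. For $t\in\mathbb R$, $\|t\|_{\mathbb R/\mathbb Z}$ denotes the distance from $t$ to the nearest integer. *)

theory Defs
  imports Complex_Main
begin

definition dist_Z :: "real \<Rightarrow> real" where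
  "dist_Z t = \<bar>t - of_int (round t)\<bar>"

definition bfun :: "real \<Rightarrow> nat \<Rightarrow> real \<Rightarrow> real" where
  "bfun N i x = sqrt N * exp (- (x^2) / 2) * x ^ i / sqrt (fact i)"

end

theory Submission
  imports Defs "HOL-Real_Asymp.Real_Asymp"
begin

lemma exp_partial_le:
  fixes y :: real assumes "0 \<le> y"
  shows "(\<Sum>i<K. y^i / fact i) \<le> exp y"
proof -
  have s: "(\<lambda>i. y^i / fact i) sums exp y"
    using exp_converges[of y] by (simp add: divide_inverse mult.commute)
  show ?thesis
    using sum_le_suminf[OF sums_summable[OF s], of "{..<K}"] sums_unique[OF s] assms by auto
qed

lemma tail_bound:
  fixes l T :: real and m K :: nat
  assumes l: "0 < l" and T: "0 \<le> T" "T \<le> l/2" and m: "l + T \<le> real m"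
  shows "(\<Sum>i\<in>{m..K}. exp (-l) * l^i / fact i) \<le> exp (-(T^2/(8*l)))"
proof -
  define s where "s = T/(2*l)"
  define t where "t = 1 + s"
  have s0: "0 \<le> s" and s1: "s \<le> 1" using l T by (auto simp: s_def field_simps)
  have t1: "1 \<le> t" using s0 by (simp add: t_def)
  have "(\<Sum>i\<in>{m..K}. l^i / fact i) \<le> (\<Sum>i\<in>{m..K}. (l*t)^i / fact i / t^m)"
  proof (rule sum_mono)
    fix i assume "i \<in> {m..K}"
    hence "t^m \<le> t^i" using t1 by (simp add: power_increasing)
    hence "l^i * t^m \<le> l^i * t^i" using l by (simp add: mult_left_mono)
    thus "l^i / fact i \<le> (l*t)^i / fact i / t^m" using t1 l
      by (simp add: field_simps power_mult_distrib)
  qed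
  also have "\<dots> = (\<Sum>i\<in>{m..K}. (l*t)^i / fact i) / t^m" by (simp add: sum_divide_distrib)
  also have "\<dots> \<le> (\<Sum>i<Suc K. (l*t)^i / fact i) / t^m"
  proof -
    have "(\<Sum>i\<in>{m..K}. (l*t)^i / fact i) \<le> (\<Sum>i<Suc K. (l*t)^i / fact i)"
      by (rule sum_mono2) (use l t1 in auto)
    thus ?thesis using t1 by (simp add: divide_right_mono)
  qed
  also have "\<dots> \<le> exp (l*t) / t^m"
    using exp_partial_le[of "l*t" "Suc K"] l t1 by (simp add: divide_right_mono)
  finally have A: "(\<Sum>i\<in>{m..K}. l^i / fact i) \<le> exp (l*t) / t^m" .
  have "t^m = exp (real m * ln t)" using t1 by (simp add: exp_of_nat_mult)
  moreover have "(l+T) * ln t \<le> real m * ln t" using m t1 by (intro mult_right_mono) auto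
  moreover have "(l+T) * (s - s^2) \<le> (l+T) * ln t"
    using ln_one_plus_pos_lower_bound[OF s0 s1] l T unfolding t_def by (intro mult_left_mono) auto
  ultimately have tm: "exp ((l+T)*(s - s^2)) \<le> t^m" by simp
  have "(\<Sum>i\<in>{m..K}. exp (-l) * l^i / fact i) = exp (-l) * (\<Sum>i\<in>{m..K}. l^i / fact i)"
    by (simp add: sum_distrib_left)
  also have "\<dots> \<le> exp (-l) * (exp (l*t) / t^m)" by (rule mult_left_mono[OF A]) simp
  also have "\<dots> \<le> exp (-l) * (exp (l*t) / exp ((l+T)*(s - s^2)))"
    using tm t1 by (intro mult_left_mono divide_left_mono) (simp_all add: zero_less_mult_iff)
  also have "\<dots> = exp (-l + l*t - (l+T)*(s - s^2))" by (simp add: exp_diff exp_add exp_minus divide_inverse)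
  also have "\<dots> \<le> exp (-(T^2/(8*l)))"
  proof -
    have e1: "-l + l*t - (l+T)*(s - s^2) = -T*s + (l+T)*s^2"
      unfolding t_def by (simp add: algebra_simps)
    have e2: "-T*s = -(T^2/(2*l))" using l unfolding s_def by (simp add: power2_eq_square)
    have e3: "(l+T)*s^2 = T^2/(4*l) + T^3/(4*l^2)"
      using l unfolding s_def by (simp add: power2_eq_square power3_eq_cube field_simps)
    have e: "-l + l*t - (l+T)*(s - s^2) = -(T^2/(4*l)) + T^3/(4*l^2)"
      unfolding e1 e2 e3 by simp
    have "T^3/(4*l^2) \<le> T^2/(8*l)"
    proof -
      have "T * (8*l) \<le> 4*l^2" using T l by (simp add: power2_eq_square)
      hence "T^2 * (T * (8*l)) \<le> T^2 * (4*l^2)" by (intro mult_left_mono) auto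
      hence "T^3 * (8*l) \<le> T^2 * (4*l^2)" by (simp add: power2_eq_square power3_eq_cube algebra_simps)
      thus ?thesis using l by (simp add: field_simps)
    qed
    thus ?thesis unfolding e by simp
  qed
  finally show ?thesis .
qed

lemma mass_bound:
  fixes l T :: real and n :: nat
  assumes l: "0 < l" and T: "0 \<le> T" "T \<le> l/2" and m: "l + T \<le> real (Suc n)"
  shows "1 - exp (-l) - exp (-(T^2/(8*l))) \<le> (\<Sum>i\<in>{1..n}. exp (-l) * l^i / fact i)"
proof -
  define f where "f = (\<lambda>i. l^i / fact i)"
  have s: "f sums exp l"
    using exp_converges[of l] unfolding f_def by (simp add: divide_inverse mult.commute)
  hence lim: "(\<lambda>K. \<Sum>i<K. f i) \<longlonglongrightarrow> exp l" by (simp add: sums_def)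
  have bound: "(\<Sum>i<K. f i) \<le> (\<Sum>i\<in>{..n}. f i) + exp l * exp (-(T^2/(8*l)))" if "K \<ge> Suc n" for K
  proof -
    have "{..<K} = {..n} \<union> {Suc n..K-1}" using that by auto
    hence "(\<Sum>i<K. f i) = (\<Sum>i\<in>{..n}. f i) + (\<Sum>i\<in>{Suc n..K-1}. f i)"
      by (simp add: sum.union_disjoint)
    moreover have "(\<Sum>i\<in>{Suc n..K-1}. f i) \<le> exp l * exp (-(T^2/(8*l)))"
    proof -
      have "(\<Sum>i\<in>{Suc n..K-1}. exp (-l) * l^i / fact i) \<le> exp (-(T^2/(8*l)))"
        by (rule tail_bound[OF l T m])
      hence "exp (-l) * (\<Sum>i\<in>{Suc n..K-1}. f i) \<le> exp (-(T^2/(8*l)))"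
        unfolding f_def by (simp add: sum_distrib_left)
      hence "exp l * (exp (-l) * (\<Sum>i\<in>{Suc n..K-1}. f i)) \<le> exp l * exp (-(T^2/(8*l)))"
        by (intro mult_left_mono) auto
      thus ?thesis by (metis exp_minus_inverse mult.assoc mult_1)
    qed
    ultimately show ?thesis by simp
  qed
  have "exp l \<le> (\<Sum>i\<in>{..n}. f i) + exp l * exp (-(T^2/(8*l)))"
    by (rule LIMSEQ_le_const2[OF lim]) (use bound in blast)
  hence "exp (-l) * exp l \<le> exp (-l) * ((\<Sum>i\<in>{..n}. f i) + exp l * exp (-(T^2/(8*l))))"
    by (intro mult_left_mono) auto
  moreover have e1: "exp (-l) * exp l = 1" by (metis exp_minus_inverse mult.commute)
  moreover have "exp (-l) * ((\<Sum>i\<in>{..n}. f i) + exp l * exp (-(T^2/(8*l))))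
     = exp (-l) * (\<Sum>i\<in>{..n}. f i) + (exp (-l) * exp l) * exp (-(T^2/(8*l)))"
    by (simp only: distrib_left mult.assoc)
  ultimately have A: "1 \<le> exp (-l) * (\<Sum>i\<in>{..n}. f i) + exp (-(T^2/(8*l)))"
    by simp
  have "{..n} = insert 0 {1..n}" by auto
  hence "(\<Sum>i\<in>{..n}. f i) = f 0 + (\<Sum>i\<in>{1..n}. f i)" by simp
  hence "exp (-l) * (\<Sum>i\<in>{..n}. f i) = exp (-l) + (\<Sum>i\<in>{1..n}. exp (-l) * l^i / fact i)"
    unfolding f_def by (simp add: distrib_left sum_distrib_left)
  thus ?thesis using A by simp
qed

lemma dist_Z_small: "0 \<le> t \<Longrightarrow> t \<le> 1/2 \<Longrightarrow> dist_Z t = t"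
proof -
  assume a: "0 \<le> t" "t \<le> 1/2"
  show ?thesis
  proof (cases "t = 1/2")
    case True
    have "round t = 1" using True by (intro round_unique) auto
    hence "dist_Z t = \<bar>t - 1\<bar>" by (simp add: dist_Z_def)
    also have "\<dots> = t" using True by simp
    finally show ?thesis .
  next
    case False
    have "round t = 0" using a False by (intro round_unique) auto
    thus ?thesis using a by (simp add: dist_Z_def)
  qed
qed

lemma bfun_Suc: "bfun N (Suc i) x = bfun N i x * (x / sqrt (Suc i))"
  by (simp add: bfun_def real_sqrt_mult field_simps del: of_nat_Suc)

lemma bfun_nonneg: "0 \<le> N \<Longrightarrow> 0 \<le> x \<Longrightarrow> 0 \<le> bfun N i x"
  by (simp add: bfun_def)

lemma bfun_sq: "0 \<le> N \<Longrightarrow> (bfun N i x)^2 = N * (exp (-(x^2)) * (x^2)^i / fact i)"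
proof -
  assume N: "0 \<le> N"
  have "(bfun N i x)^2 = (sqrt N)^2 * (exp (- (x^2) / 2))^2 * (x^i)^2 / (sqrt (fact i))^2"
    by (simp add: bfun_def power_mult_distrib power_divide)
  also have "(exp (- (x^2) / 2))^2 = exp (-(x^2))"
    by (simp add: exp_double[symmetric] power2_eq_square exp_add[symmetric])
  also have "(x^i)^2 = (x^2)^i" by (simp add: power_mult[symmetric] mult.commute)
  finally show ?thesis using N by simp
qed

lemma band:
  fixes u :: "nat \<Rightarrow> real"
  assumes pq: "p < q" and up: "u p > 1/2" and uq: "u q \<le> 1/4" and r0: "0 < \<rho>" and r1: "\<rho> \<le> 1"
    and rL: "\<rho>^L \<ge> 1/2"
    and step: "\<And>i. p \<le> i \<Longrightarrow> i < q \<Longrightarrow> \<rho> * u i \<le> u (Suc i) \<and> u (Suc i) \<le> u i"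
  shows "\<exists>j. p < j \<and> j + L \<le> q \<and> (\<forall>l<L. 1/4 < u (j+l) \<and> u (j+l) \<le> 1/2)"
proof -
  define S where "S = {i. p \<le> i \<and> i \<le> q \<and> u i \<le> 1/2}"
  have qS: "q \<in> S" using pq uq by (simp add: S_def)
  define j where "j = (LEAST i. i \<in> S)"
  have jS: "j \<in> S" unfolding j_def by (rule LeastI[of "\<lambda>i. i \<in> S", OF qS])
  have jmin: "\<And>i. i \<in> S \<Longrightarrow> j \<le> i" unfolding j_def by (rule Least_le)
  have jp: "p < j" using jS up by (cases "j = p") (auto simp: S_def)
  have jq: "j \<le> q" using jS by (simp add: S_def)
  have uj1: "u (j - 1) > 1/2"
  proof (rule ccontr)
    assume "\<not> ?thesis"
    hence "j - 1 \<in> S" using jp jq by (auto simp: S_def)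
    from jmin[OF this] jp show False by simp
  qed
  have uj: "u j \<le> 1/2" using jS by (simp add: S_def)
  have pL: "\<rho>^L/2 \<ge> 1/4" using rL by simp
  have main: "l < L \<longrightarrow> j + l < q \<and> \<rho>^(Suc l)/2 < u (j+l) \<and> u (j+l) \<le> 1/2" for l
  proof (induction l)
    case 0
    have st: "\<rho> * u (j-1) \<le> u j" using step[of "j-1"] jp jq by simp
    have "\<rho> / 2 < \<rho> * u (j-1)" using uj1 r0 by simp
    hence lt: "\<rho>/2 < u j" using st by simp
    show ?case
    proof
      assume L0: "0 < L"
      have "\<rho>^L \<le> \<rho>^(Suc 0)" using r0 r1 L0 by (intro power_decreasing) auto
      hence "1/4 < u j" using lt pL by simp
      hence "j \<noteq> q" using uq by auto
      thus "j + 0 < q \<and> \<rho>^(Suc 0)/2 < u (j+0) \<and> u (j+0) \<le> 1/2" using jq lt uj by simp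
    qed
  next
    case (Suc l)
    show ?case
    proof
      assume lL: "Suc l < L"
      with Suc have ih: "j + l < q" "\<rho>^(Suc l)/2 < u (j+l)" "u (j+l) \<le> 1/2" by auto
      have st: "\<rho> * u (j+l) \<le> u (Suc (j+l))" "u (Suc (j+l)) \<le> u (j+l)" using step[of "j+l"] ih jp by auto
      have "\<rho> * (\<rho>^(Suc l)/2) < \<rho> * u (j+l)" using ih r0 by simp
      hence lt: "\<rho>^(Suc (Suc l))/2 < u (j + Suc l)" using st by simp
      have "\<rho>^L \<le> \<rho>^(Suc (Suc l))" using r0 r1 lL by (intro power_decreasing) auto
      hence "1/4 < u (j + Suc l)" using lt pL by simp
      hence "j + Suc l \<noteq> q" using uq by auto
      moreover have "j + Suc l \<le> q" using ih by simp
      ultimately show "j + Suc l < q \<and> \<rho>^(Suc (Suc l))/2 < u (j + Suc l) \<and> u (j + Suc l) \<le> 1/2"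
        using lt st ih by simp
    qed
  qed
  have A: "\<forall>l<L. 1/4 < u (j+l) \<and> u (j+l) \<le> 1/2"
  proof (intro allI impI)
    fix l assume "l < L"
    hence m: "j + l < q" "\<rho>^(Suc l)/2 < u (j+l)" "u (j+l) \<le> 1/2" using main by auto
    have "\<rho>^L \<le> \<rho>^(Suc l)" using r0 r1 \<open>l < L\<close> by (intro power_decreasing) auto
    thus "1/4 < u (j+l) \<and> u (j+l) \<le> 1/2" using m pL by simp
  qed
  have "j + L \<le> q"
  proof (cases L)
    case 0 thus ?thesis using jq by simp
  next
    case (Suc k) thus ?thesis using main[of k] by simp
  qed
  thus ?thesis using jp A by blast
qed

lemma ratio_ge1: "0 < x \<Longrightarrow> real (Suc i) \<le> x^2 \<Longrightarrow> 1 \<le> x / sqrt (Suc i)"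
proof -
  assume x: "0 < x" and h: "real (Suc i) \<le> x^2"
  have "sqrt (Suc i) \<le> sqrt (x^2)" using h by (rule real_sqrt_le_mono)
  hence "sqrt (Suc i) \<le> x" using x by simp
  thus ?thesis by simp
qed

lemma ratio_le1: "0 < x \<Longrightarrow> x^2 \<le> real (Suc i) \<Longrightarrow> x / sqrt (Suc i) \<le> 1"
proof -
  assume x: "0 < x" and h: "x^2 \<le> real (Suc i)"
  have "sqrt (x^2) \<le> sqrt (Suc i)" using h by (rule real_sqrt_le_mono)
  hence "x \<le> sqrt (Suc i)" using x by simp
  thus ?thesis by simp
qed

lemma ratio_lb: "0 < x \<Longrightarrow> real (Suc i) \<le> real q \<Longrightarrow> x / sqrt q \<le> x / sqrt (Suc i)"
  by (intro divide_left_mono real_sqrt_le_mono) auto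

lemma peak:
  assumes N: "0 \<le> N" and x: "0 < x" and p1: "real p < x^2" and p2: "x^2 \<le> real (Suc p)"
  shows "bfun N i x \<le> bfun N p x"
proof (cases "i \<le> p")
  case True
  have "bfun N (p - d) x \<le> bfun N p x" for d
  proof (induction d)
    case 0 thus ?case by simp
  next
    case (Suc d)
    show ?case
    proof (cases "d < p")
      case True
      hence e: "p - d = Suc (p - Suc d)" by simp
      have "real (Suc (p - Suc d)) \<le> x^2" using True p1 by linarith
      hence "1 \<le> x / sqrt (Suc (p - Suc d))" using ratio_ge1 x by blast
      hence "bfun N (p - Suc d) x * 1 \<le> bfun N (p - Suc d) x * (x / sqrt (Suc (p - Suc d)))"
        using bfun_nonneg[OF N, of x] x by (intro mult_left_mono) auto
      also have "\<dots> = bfun N (p - d) x" unfolding e bfun_Suc ..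
      finally show ?thesis using Suc by simp
    next
      case False
      hence "p - Suc d = p - d" by simp
      thus ?thesis using Suc by simp
    qed
  qed
  from this[of "p - i"] True show ?thesis by simp
next
  case False
  have "bfun N (p + d) x \<le> bfun N p x" for d
  proof (induction d)
    case 0 thus ?case by simp
  next
    case (Suc d)
    have "x^2 \<le> real (Suc (p + d))" using p2 by simp
    hence "x / sqrt (Suc (p + d)) \<le> 1" using ratio_le1 x by blast
    hence "bfun N (p + d) x * (x / sqrt (Suc (p + d))) \<le> bfun N (p + d) x * 1"
      using bfun_nonneg[OF N, of x] x by (intro mult_left_mono) auto
    thus ?case using Suc by (simp add: bfun_Suc)
  qed
  from this[of "i - p"] False show ?thesis by simp
qed

theorem theorem3p4:
  fixes c1 c2 A C r :: real
  assumes "0 < c1" "c1 < c2" "0 < A" "0 < C" "0 < r"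
  shows "\<exists>N0::real. \<forall>(n::nat) (M::real) (N::real).
           N = M \<and> M \<ge> N0 \<and> {c1 * M .. c2 * M} \<subseteq> {0 .. sqrt (real n) - M} \<longrightarrow>
           (\<forall>x \<in> {c1 * M .. c2 * M}.
              \<not> (\<exists>D::real. r \<le> D \<and> D \<le> N powr A \<and>
                   (\<Sum>i = 1..n. (dist_Z (D * bfun N i x))\<^sup>2) \<le> C * ln N))"
proof -
  note pos = assms
  have ev1: "eventually (\<lambda>M::real. 4 \<le> M) at_top" by real_asymp
  have ev2: "eventually (\<lambda>M::real. M powr (3/2) + 1 \<le> M^2) at_top" by real_asymp
  have ev3: "eventually (\<lambda>M::real. M powr (3/2) - 1 \<le> c1^2 * M^2 / 2) at_top" using pos by real_asymp
  have ev4: "eventually (\<lambda>M::real. M powr (3/2) / 2 \<le> M powr (3/2) - 1) at_top" by real_asymp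
  have ev5: "eventually (\<lambda>M::real. M powr (2*A) * M * exp(-(M / (32*c2^2))) \<le> 1/16) at_top"
    using pos by real_asymp
  have ev6: "eventually (\<lambda>M::real. (M powr (3/2) + 1) * (16 * C * ln M + 2) \<le> ln 4 * c1^2 * M^2) at_top"
    using pos by real_asymp
  have ev7: "eventually (\<lambda>M::real. exp(-(c1^2*M^2)) + exp(-(M / (32*c2^2))) \<le> 1/2) at_top"
    using pos by real_asymp
  have ev8: "eventually (\<lambda>M::real. C * ln M < r^2 * M / 2) at_top" using pos by real_asymp
  have "eventually (\<lambda>M::real. 4 \<le> M \<and> M powr (3/2) + 1 \<le> M^2 \<and> M powr (3/2) - 1 \<le> c1^2 * M^2 / 2
     \<and> M powr (3/2) / 2 \<le> M powr (3/2) - 1 \<and> M powr (2*A) * M * exp(-(M / (32*c2^2))) \<le> 1/16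
     \<and> (M powr (3/2) + 1) * (16 * C * ln M + 2) \<le> ln 4 * c1^2 * M^2
     \<and> exp(-(c1^2*M^2)) + exp(-(M / (32*c2^2))) \<le> 1/2 \<and> C * ln M < r^2 * M / 2) at_top"
    by (intro eventually_conj ev1 ev2 ev3 ev4 ev5 ev6 ev7 ev8)
  then obtain N0 where N0: "\<And>M. M \<ge> N0 \<Longrightarrow> 4 \<le> M \<and> M powr (3/2) + 1 \<le> M^2 \<and> M powr (3/2) - 1 \<le> c1^2 * M^2 / 2
     \<and> M powr (3/2) / 2 \<le> M powr (3/2) - 1 \<and> M powr (2*A) * M * exp(-(M / (32*c2^2))) \<le> 1/16
     \<and> (M powr (3/2) + 1) * (16 * C * ln M + 2) \<le> ln 4 * c1^2 * M^2
     \<and> exp(-(c1^2*M^2)) + exp(-(M / (32*c2^2))) \<le> 1/2 \<and> C * ln M < r^2 * M / 2"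
    by (auto simp: eventually_at_top_linorder)
  show ?thesis
  proof (rule exI[of _ N0], intro allI impI ballI notI)
    fix n :: nat and M N x :: real
    assume H: "N = M \<and> N0 \<le> M \<and> {c1 * M .. c2 * M} \<subseteq> {0 .. sqrt (real n) - M}"
      and xI: "x \<in> {c1 * M .. c2 * M}"
      and ex: "\<exists>D::real. r \<le> D \<and> D \<le> N powr A \<and> (\<Sum>i = 1..n. (dist_Z (D * bfun N i x))\<^sup>2) \<le> C * ln N"
    from H have NM: "N = M" and MN0: "N0 \<le> M" and sub: "{c1 * M .. c2 * M} \<subseteq> {0 .. sqrt (real n) - M}" by auto
    from N0[OF MN0] have M4: "4 \<le> M" and c2: "M powr (3/2) + 1 \<le> M^2" and c3: "M powr (3/2) - 1 \<le> c1^2 * M^2 / 2"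
      and c4: "M powr (3/2) / 2 \<le> M powr (3/2) - 1" and c5: "M powr (2*A) * M * exp(-(M / (32*c2^2))) \<le> 1/16"
      and c6: "(M powr (3/2) + 1) * (16 * C * ln M + 2) \<le> ln 4 * c1^2 * M^2"
      and c7: "exp(-(c1^2*M^2)) + exp(-(M / (32*c2^2))) \<le> 1/2" and c8: "C * ln M < r^2 * M / 2"
      by auto
    from ex obtain D where D1: "r \<le> D" and D2: "D \<le> M powr A"
      and DS: "(\<Sum>i = 1..n. (dist_Z (D * bfun M i x))\<^sup>2) \<le> C * ln M" using NM by auto
    have M0: "0 < M" using M4 by simp
    have x1: "c1 * M \<le> x" and x2: "x \<le> c2 * M" using xI by auto
    have x0: "0 < x" using x1 pos M0 by (smt (verit) mult_pos_pos)
    define l where "l = x^2"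
    have l1: "c1^2 * M^2 \<le> l" unfolding l_def using x1 pos M0
      by (metis power_mono power_mult_distrib mult_nonneg_nonneg less_imp_le)
    have l2: "l \<le> c2^2 * M^2" unfolding l_def using x2 x0
      by (metis power_mono power_mult_distrib less_imp_le)
    have l0: "0 < l" using x0 by (simp add: l_def)
    have "c2 * M \<in> {c1 * M .. c2 * M}" using pos M0 by auto
    hence "c2 * M \<le> sqrt (real n) - M" using sub by auto
    hence "x + M \<le> sqrt (real n)" using x2 by simp
    hence "(x + M)^2 \<le> (sqrt (real n))^2" using x0 M0 by (intro power_mono) auto
    hence xMn: "(x + M)^2 \<le> real n" by simp
    have "l + M^2 \<le> (x + M)^2" unfolding l_def using x0 M0 by (simp add: power2_sum)
    hence lMn: "l + M^2 \<le> real n" using xMn by simp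
    obtain p :: nat where p1: "real p < l" and p2: "l \<le> real (Suc p)"
    proof -
      have "0 \<le> \<lceil>l\<rceil> - 1" using l0 by simp
      moreover have "real_of_int (\<lceil>l\<rceil> - 1) < l" "l \<le> real_of_int (\<lceil>l\<rceil> - 1) + 1"
        using ceiling_correct[of l] by auto
      ultimately show ?thesis using that[of "nat (\<lceil>l\<rceil> - 1)"] by simp
    qed
    define K where "K = nat \<lceil>M powr (3/2)\<rceil>"
    have K1: "M powr (3/2) \<le> real K" unfolding K_def by linarith
    have K2: "real K \<le> M powr (3/2) + 1" unfolding K_def
      using ceiling_correct[of "M powr (3/2)"] M0 by (simp add: of_nat_nat)
    have K0: "0 < K" using K1 M0 by (metis of_nat_0 not_gr0 powr_gt_zero not_le less_irrefl)
    define q where "q = p + K"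
    define T where "T = M powr (3/2) - 1"
    have qT: "l + T \<le> real q" unfolding q_def T_def using p2 K1 by simp
    have "real q \<le> real n" using p1 K2 c2 lMn unfolding q_def of_nat_add by linarith
    hence qn: "q \<le> n" by simp
    have T0: "M powr (3/2) / 2 \<le> T" using c4 by (simp add: T_def)
    have Mp: "0 < M powr (3/2)" using M0 by simp
    have Tnn: "0 \<le> T" using T0 Mp by linarith
    have Tl: "T \<le> l / 2" using c3 l1 unfolding T_def by linarith
    have M3: "(M powr (3/2))^2 = M^3"
    proof -
      have "(M powr (3/2))^2 = M powr (3/2) * M powr (3/2)" by (simp add: power2_eq_square)
      also have "\<dots> = M powr 3" by (simp add: powr_add[symmetric])
      also have "\<dots> = M^3" using M0 by (simp add: powr_realpow)
      finally show ?thesis .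
    qed
    have TE: "exp (-(T^2/(8*l))) \<le> exp (-(M / (32*c2^2)))"
    proof -
      have "(M powr (3/2) / 2)^2 \<le> T^2" using T0 Mp by (intro power_mono) auto
      moreover have "(M powr (3/2) / 2)^2 = M^3 / 4" using M3 by (simp add: power_divide)
      ultimately have "M^3/4 \<le> T^2" by simp
      hence "(M^3/4) / (8 * (c2^2 * M^2)) \<le> T^2 / (8*l)"
        using l0 l2 M0 by (intro frac_le) auto
      moreover have "(M^3/4) / (8 * (c2^2 * M^2)) = M / (32*c2^2)"
        using M0 pos by (simp add: field_simps power2_eq_square power3_eq_cube)
      ultimately show ?thesis by simp
    qed
    define u where "u = (\<lambda>i. D * bfun M i x)"
    have D0: "0 < D" using D1 pos by simp
    have u0: "0 \<le> u i" for i unfolding u_def using D0 bfun_nonneg[of M x i] M0 x0 by simp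
    have upeak: "u i \<le> u p" for i
      unfolding u_def using peak[of M x p i] M0 x0 p1 p2 D0 by (simp add: l_def)
    have usq: "(u i)^2 = D^2 * (M * (exp (-l) * l^i / fact i))" for i
      unfolding u_def l_def using bfun_sq[of M i x] M0 by (simp add: power_mult_distrib)
    show False
    proof (cases "u p \<le> 1/2")
      case True
      have "(\<Sum>i = 1..n. (dist_Z (u i))^2) = (\<Sum>i = 1..n. D^2 * M * (exp (-l) * l^i / fact i))"
      proof (rule sum.cong[OF refl])
        fix i
        have "u i \<le> 1/2" using upeak[of i] True by linarith
        hence "dist_Z (u i) = u i" using dist_Z_small u0 by blast
        thus "(dist_Z (u i))^2 = D^2 * M * (exp (-l) * l^i / fact i)" using usq[of i] by (simp add: mult.assoc)
      qed
      also have "\<dots> = D^2 * M * (\<Sum>i = 1..n. exp (-l) * l^i / fact i)" by (simp add: sum_distrib_left)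
      also have "\<dots> \<ge> r^2 * M * (1/2)"
      proof -
        have "1 - exp (-l) - exp (-(T^2/(8*l))) \<le> (\<Sum>i = 1..n. exp (-l) * l^i / fact i)"
          by (rule mass_bound[OF l0 Tnn Tl]) (use qT qn in simp)
        moreover have "exp (-l) \<le> exp (-(c1^2*M^2))" using l1 by simp
        ultimately have "1/2 \<le> (\<Sum>i = 1..n. exp (-l) * l^i / fact i)" using TE c7 by linarith
        moreover have "r^2 * M \<le> D^2 * M" using D1 pos M0 by (intro mult_right_mono power_mono) auto
        ultimately show ?thesis using pos M0 by (intro mult_mono) auto
      qed
      finally have "r^2 * M / 2 \<le> C * ln M" using DS unfolding u_def by simp
      thus False using c8 by simp
    next
      case False
      hence up: "1/2 < u p" by simp
      have uq: "u q \<le> 1/4"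
      proof -
        have "(exp (-l) * l^q / fact q) \<le> exp (-(T^2/(8*l)))"
          using tail_bound[OF l0 Tnn Tl qT, of q] by simp
        hence pq: "(exp (-l) * l^q / fact q) \<le> exp (-(M / (32*c2^2)))" using TE by (rule order.trans)
        have "D^2 \<le> (M powr A)^2" using D0 D2 by (intro power_mono) auto
        also have "(M powr A)^2 = M powr (A + A)" unfolding power2_eq_square by (rule powr_add[symmetric])
        also have "A + A = 2 * A" by simp
        finally have D2': "D^2 \<le> M powr (2*A)" .
        have "(u q)^2 = D^2 * (M * (exp (-l) * l^q / fact q))" by (rule usq)
        also have "\<dots> \<le> M powr (2*A) * (M * exp (-(M / (32*c2^2))))"
          using D2' pq M0 l0 by (intro mult_mono) auto
        also have "\<dots> = M powr (2*A) * M * exp (-(M / (32*c2^2)))" by (simp only: mult.assoc)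
        also have "\<dots> \<le> 1/16" by (rule c5)
        finally have "(u q)^2 \<le> 1/16" .
        moreover have "(1/4::real)^2 = 1/16" by (simp add: power2_eq_square)
        ultimately have "(u q)^2 \<le> (1/4)^2" by simp
        thus ?thesis by (rule power2_le_imp_le) simp
      qed
      define \<rho> where "\<rho> = x / sqrt (real q)"
      have pq: "p < q" using K0 by (simp add: q_def)
      have lq: "l \<le> real q" using p2 pq by linarith
      have r0: "0 < \<rho>" using x0 pq by (simp add: \<rho>_def)
      have r1: "\<rho> \<le> 1"
      proof -
        have "sqrt l \<le> sqrt (real q)" using lq by (rule real_sqrt_le_mono)
        hence "x \<le> sqrt (real q)" using x0 unfolding l_def by simp
        moreover have "0 < sqrt (real q)" using pq by simp
        ultimately show ?thesis unfolding \<rho>_def by simp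
      qed
      have step: "\<rho> * u i \<le> u (Suc i) \<and> u (Suc i) \<le> u i" if "p \<le> i" "i < q" for i
      proof -
        have e: "u (Suc i) = u i * (x / sqrt (Suc i))" unfolding u_def by (simp add: bfun_Suc)
        have a: "x / sqrt (Suc i) \<le> 1" using ratio_le1[OF x0] p2 that unfolding l_def by simp
        have b: "\<rho> \<le> x / sqrt (Suc i)" unfolding \<rho>_def using ratio_lb[OF x0] that by simp
        have "\<rho> * u i \<le> (x / sqrt (Suc i)) * u i" using b u0[of i] by (rule mult_right_mono)
        moreover have "u i * (x / sqrt (Suc i)) \<le> u i * 1" using a u0[of i] by (rule mult_left_mono)
        ultimately show ?thesis unfolding e by (simp add: mult.commute)
      qed
      define L where "L = nat \<lceil>16 * C * ln M\<rceil> + 1"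
      have lnM: "0 \<le> ln M" using M4 by simp
      have L1: "16 * C * ln M < real L" unfolding L_def by linarith
      have L2: "real L \<le> 16 * C * ln M + 2"
      proof -
        have y0: "0 \<le> 16 * C * ln M" using lnM pos by simp
        hence "real (nat \<lceil>16 * C * ln M\<rceil>) = of_int \<lceil>16 * C * ln M\<rceil>" by simp
        thus ?thesis unfolding L_def using ceiling_correct[of "16 * C * ln M"] by simp
      qed
      have rL: "1/2 \<le> \<rho>^L"
      proof -
        define K' where "K' = M powr (3/2) + 1"
        define y where "y = K' / l"
        have K'0: "0 \<le> K'" using Mp by (simp add: K'_def)
        have y0: "0 \<le> y" using l0 K'0 by (simp add: y_def)
        have cM: "0 < c1^2 * M^2" using pos M0 by simp
        have "real q \<le> l + K'" unfolding q_def K'_def using p1 K2 by simp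
        hence "real q / l \<le> (l + K') / l" using l0 by (intro divide_right_mono) auto
        also have "\<dots> = 1 + y" using l0 by (simp add: y_def add_divide_distrib)
        finally have qy: "real q / l \<le> 1 + y" .
        have "(real q / l)^L \<le> (1 + y)^L" using l0 qy by (intro power_mono) auto
        also have "\<dots> \<le> (exp y)^L" by (rule power_mono[OF exp_ge_add_one_self]) (use y0 in simp)
        also have "\<dots> = exp (real L * y)" by (rule exp_of_nat_mult[symmetric])
        also have "\<dots> \<le> exp (ln 4)"
        proof -
          have yb: "y \<le> K' / (c1^2 * M^2)" unfolding y_def
            by (intro divide_left_mono) (use l0 cM K'0 l1 in auto)
          have "real L * y \<le> (16 * C * ln M + 2) * y" using L2 y0 by (rule mult_right_mono)
          also have "(16 * C * ln M + 2) * y \<le> (16 * C * ln M + 2) * (K' / (c1^2 * M^2))"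
            using lnM pos yb by (intro mult_left_mono) auto
          also have "(16 * C * ln M + 2) * (K' / (c1^2 * M^2)) = (K' * (16 * C * ln M + 2)) / (c1^2 * M^2)"
            by simp
          also have "\<dots> \<le> ln 4" using c6 cM unfolding K'_def by (simp add: pos_divide_le_eq mult.assoc)
          finally show ?thesis by (simp only: exp_le_cancel_iff)
        qed
        also have "\<dots> = 4" by simp
        finally have A1: "(real q / l)^L \<le> 4" .
        have r2: "\<rho>^2 = l / real q" unfolding \<rho>_def l_def by (simp add: power_divide)
        have "(\<rho>^L)^2 = (\<rho>^2)^L" by (metis power_mult mult.commute)
        also have "\<dots> = inverse ((real q / l)^L)" unfolding r2 by (simp only: power_inverse[symmetric] inverse_divide)
        also have "\<dots> \<ge> inverse 4"
        proof (rule le_imp_inverse_le[OF A1])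
          show "0 < (real q / l)^L" using l0 pq by simp
        qed
        finally have "(1/2)^2 \<le> (\<rho>^L)^2" by (simp add: power2_eq_square)
        thus ?thesis by (rule power2_le_imp_le) (use r0 in simp)
      qed
      obtain j where j1: "p < j" and j2: "j + L \<le> q" and j3: "\<forall>l<L. 1/4 < u (j+l) \<and> u (j+l) \<le> 1/2"
        using band[OF pq up uq r0 r1 rL step] by blast
      have "real L / 16 = (\<Sum>i\<in>{j..<j+L}. 1/16)" by simp
      also have "\<dots> \<le> (\<Sum>i\<in>{j..<j+L}. (dist_Z (u i))^2)"
      proof (rule sum_mono)
        fix i assume "i \<in> {j..<j+L}"
        hence i: "i = j + (i - j)" "i - j < L" by auto
        hence "1/4 < u i" "u i \<le> 1/2" using j3 by (metis, metis)
        hence d: "dist_Z (u i) = u i" "1/4 < u i" using dist_Z_small by auto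
        have "(1/4)^2 \<le> (dist_Z (u i))^2" unfolding d(1) using d(2) by (intro power_mono) auto
        thus "1/16 \<le> (dist_Z (u i))^2" by (simp add: power2_eq_square)
      qed
      also have "\<dots> \<le> (\<Sum>i = 1..n. (dist_Z (u i))^2)"
        by (rule sum_mono2) (use j1 j2 qn in auto)
      finally have "real L / 16 \<le> C * ln M" using DS unfolding u_def by simp
      thus False using L1 by simp
    qed
  qed
qed

end
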